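(* For every integer $n\ge1$, the polynomials $\operatorname{num}(n,x)$ and $\operatorname{den}(n,x)$ are coprime in $\mathbb{Z}[x]$, i.e. $\gcd(\operatorname{num}(n,x),\operatorname{den}(n,x))=1$.
   Context: A partition $\lambda$ of $n\ge 0$ (written $\lambda\vdash n$) is a finite nonincreasing sequence of positive integers summing to $n$; $m_\lambda(i)$ denotes the number of parts of $\lambda$ equal to $i$ (the empty partition is the unique partition of $0$). For $\lambda\vdash n$ define $$h_\lambda(x)=\prod_{i\ge1}(1+x^i)^{\lfloor n/i\rfloor-m_\lambda(i)}\in\mathbb{Z}[x],\qquad \operatorname{den}^*(n,x)=\prod_{i\ge1}(1+x^i)^{\lfloor n/i\rfloor},$$ (finite products since $\lfloor n/i\rfloor=0$ for $i>n$), so that $\sum_{\lambda\vdash n}\prod_j(1+x^{\lambda_j})^{-1}=\sum_{\lambda\vdash n}h_\lambda(x)/\operatorname{den}^*(n,x)$. Let $G(n,x)=\gcd\{h_\lambda(x):\lambda\vdash n\}$ in $\mathbb{Z}[x]$ (normalized to have positive leading coefficient; it is a product of cyclotomic polynomials), and define $$\operatorname{num}(n,x)=\frac{1}{G(n,x)}\sum_{\lambda\vdash n}h_\lambda(x),\qquad \operatorname{den}(n,x)=\frac{\operatorname{den}^*(n,x)}{G(n,x)}.$$ Note $G(n,x)$ is the gcd of the summands, not of $\sum_\lambda h_\lambda$ and $\operatorname{den}^*$. *)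

theory Defs
  imports "HOL-Library.Multiset" "HOL-Computational_Algebra.Computational_Algebra"
begin

(* Partitions of n, represented as multisets of positive parts summing to n.
   count lam i = m_lambda(i). *)
definition partitions :: "nat \<Rightarrow> nat multiset set" where
  "partitions n = {lam. (\<forall>i\<in>#lam. 0 < i) \<and> sum_mset lam = n}"

definition onepx :: "nat \<Rightarrow> int poly" where
  "onepx i = 1 + monom 1 i"

(* h_lambda(x) = prod_{i>=1} (1+x^i)^(floor(n/i) - m_lambda(i)) ; factors with i > n are 1 *)
definition h_part :: "nat \<Rightarrow> nat multiset \<Rightarrow> int poly" where
  "h_part n lam = (\<Prod>i\<in>{1..n}. onepx i ^ (n div i - count lam i))"

definition den_star :: "nat \<Rightarrow> int poly" where
  "den_star n = (\<Prod>i\<in>{1..n}. onepx i ^ (n div i))"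

(* G(n,x): gcd of the summands, normalized (positive leading coefficient) *)
definition G :: "nat \<Rightarrow> int poly" where
  "G n = Gcd (h_part n ` partitions n)"

definition num :: "nat \<Rightarrow> int poly" where
  "num n = (\<Sum>lam\<in>partitions n. h_part n lam) div G n"

definition den :: "nat \<Rightarrow> int poly" where
  "den n = den_star n div G n"

end

theory Submission
  imports Defs
begin


definition C :: "int poly \<Rightarrow> complex poly" where "C p = map_poly of_int p"

lemma coeff_C[simp]: "coeff (C p) n = of_int (coeff p n)"
  by (simp add: C_def coeff_map_poly)
lemma C_0[simp]: "C 0 = 0" by (simp add: C_def)
lemma C_1[simp]: "C 1 = 1" by (simp add: C_def)
lemma C_add[simp]: "C (p + q) = C p + C q" by (rule poly_eqI) simp
lemma C_diff[simp]: "C (p - q) = C p - C q" by (rule poly_eqI) simp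
lemma C_uminus[simp]: "C (- p) = - C p" by (rule poly_eqI) simp
lemma C_mult[simp]: "C (p * q) = C p * C q"
  by (rule poly_eqI) (simp add: coeff_mult)
lemma C_power[simp]: "C (p ^ n) = C p ^ n" by (induction n) simp_all
lemma C_prod[simp]: "C (prod f A) = (\<Prod>x\<in>A. C (f x))"
  by (induction A rule: infinite_finite_induct) simp_all
lemma C_sum[simp]: "C (sum f A) = (\<Sum>x\<in>A. C (f x))"
  by (induction A rule: infinite_finite_induct) simp_all
lemma C_monom[simp]: "C (monom c n) = monom (of_int c) n" by (simp add: C_def map_poly_monom)
lemma C_pCons[simp]: "C (pCons a p) = pCons (of_int a) (C p)"
  by (rule poly_eqI) (simp add: coeff_pCons split: nat.split)
lemma C_smult[simp]: "C (smult c p) = smult (of_int c) (C p)"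
  by (rule poly_eqI) simp
lemma C_eq_0_iff[simp]: "C p = 0 \<longleftrightarrow> p = 0" by (simp add: poly_eq_iff)
lemma degree_C[simp]: "degree (C p) = degree p" unfolding C_def by (rule degree_map_poly) simp
lemma C_pcompose: "C (pcompose p q) = pcompose (C p) (C q)"
  by (induction p) (simp_all add: pcompose_pCons)
lemma C_dvd: "p dvd q \<Longrightarrow> C p dvd C q"
  by (metis C_mult dvd_def)

lemma binom_prime_dvd:
  fixes a b :: "'a::comm_ring_1"
  assumes "prime p"
  shows "of_nat p dvd ((a + b) ^ p - a ^ p - b ^ p)"
proof -
  have p0: "p > 0" using assms prime_gt_0_nat by blast
  have set: "{..p} = insert 0 (insert p {1..<p})" using p0 by auto
  have "(a + b) ^ p = b^p + (a^p + (\<Sum>k\<in>{1..<p}. of_nat (p choose k) * a ^ k * b ^ (p - k)))"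
    using p0 by (simp add: binomial_ring set)
  moreover have "of_nat p dvd (\<Sum>k\<in>{1..<p}. of_nat (p choose k) * a ^ k * b ^ (p - k))"
  proof (rule dvd_sum)
    fix k assume "k \<in> {1..<p}"
    then have "p dvd (p choose k)" using dvd_choose_prime assms by auto
    then obtain c where "(p choose k) = p * c" by blast
    then show "of_nat p dvd of_nat (p choose k) * a ^ k * b ^ (p - k)" by (simp add: mult.assoc)
  qed
  ultimately show ?thesis by simp
qed

lemma fermat_int:
  fixes a :: int
  assumes "prime p"
  shows "int p dvd (a ^ p - a)"
proof -
  have p0: "p > 0" using assms prime_gt_0_nat by blast
  have m1: "int p dvd ((-1) ^ p + 1)"
  proof -
    have "int p dvd ((1 + (-1::int)) ^ p - 1 ^ p - (-1) ^ p)"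
      using binom_prime_dvd[OF assms, of "1::int" "-1"] by simp
    hence "int p dvd - ((-1) ^ p + 1)" using p0 by (simp add: zero_power algebra_simps)
    thus ?thesis by (simp only: dvd_minus_iff)
  qed
  show ?thesis
  proof (induction a rule: int_induct[where k=0])
    case base
    then show ?case using p0 by (simp add: zero_power)
  next
    case (step1 i)
    have "(i + 1) ^ p - (i + 1) = ((i + 1) ^ p - i ^ p - 1 ^ p) + (i ^ p - i)" by simp
    moreover have "int p dvd ((i + 1) ^ p - i ^ p - 1 ^ p)"
      using binom_prime_dvd[OF assms, of i 1] by simp
    ultimately show ?case using step1 by (metis dvd_add)
  next
    case (step2 i)
    have "(i - 1) ^ p - (i - 1) = ((i + (-1)) ^ p - i ^ p - (-1) ^ p) + (i ^ p - i) + ((-1) ^ p + 1)" by simp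
    moreover have "int p dvd ((i + (-1)) ^ p - i ^ p - (-1) ^ p)"
      using binom_prime_dvd[OF assms, of i "-1"] by simp
    ultimately show ?case using step2 m1 by (metis dvd_add)
  qed
qed

lemma pCons_as_sum: "pCons a h = [:a:] + monom 1 1 * (h :: int poly)"
  by (rule poly_eqI) (auto simp: coeff_pCons coeff_monom_mult split: nat.split)

lemma frob:
  fixes h :: "int poly"
  assumes p: "prime p"
  shows "[:int p:] dvd (h ^ p - pcompose h (monom 1 p))"
proof (induction h)
  case 0
  have p0: "p > 0" using p prime_gt_0_nat by blast
  then show ?case by (simp add: zero_power)
next
  case (pCons a h)
  let ?x = "monom (1::int) 1"
  let ?M = "monom (1::int) p"
  have e2: "pcompose (pCons a h) ?M = [:a:] + ?M * pcompose h ?M" by (simp add: pcompose_pCons)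
  have d1: "[:int p:] dvd (([:a:] + ?x*h)^p - [:a:]^p - (?x*h)^p)"
    using binom_prime_dvd[OF p, of "[:a:]" "?x*h"] by (simp add: of_nat_poly)
  have d2: "[:int p:] dvd ([:a:]^p - [:a:])"
    using fermat_int[OF p, of a] by (simp add: poly_const_pow)
  have d3: "(?x*h)^p = ?M * h^p" by (simp add: power_mult_distrib monom_power)
  have d4: "[:int p:] dvd (?M * h^p - ?M * pcompose h ?M)"
    using pCons.IH by (metis dvd_mult right_diff_distrib)
  have e1: "pCons a h = [:a:] + ?x*h" by (rule pCons_as_sum)
  have "(pCons a h) ^ p - pcompose (pCons a h) ?M = ([:a:] + ?x*h)^p - ([:a:] + ?M * pcompose h ?M)"
    by (simp only: e2, subst e1, simp only:)
  also have "\<dots> = (([:a:] + ?x*h)^p - [:a:]^p - (?x*h)^p) + ([:a:]^p - [:a:]) + (?M * h^p - ?M * pcompose h ?M)"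
    by (simp only: d3)
  finally have "(pCons a h) ^ p - pcompose (pCons a h) ?M =
     (([:a:] + ?x*h)^p - [:a:]^p - (?x*h)^p) + ([:a:]^p - [:a:]) + (?M * h^p - ?M * pcompose h ?M)" .
  then show ?case using d1 d2 d4 by (metis dvd_add)
qed

lemma diff_dvd_power_diff:
  fixes a b :: "'a::comm_ring_1"
  shows "(a - b) dvd (a ^ n - b ^ n)"
proof (induction n)
  case 0 then show ?case by simp
next
  case (Suc n)
  have "a ^ Suc n - b ^ Suc n = a * (a ^ n - b ^ n) + (a - b) * b ^ n" by (simp add: algebra_simps)
  then show ?case using Suc by (metis dvd_add dvd_mult dvd_triv_left)
qed

lemma lemL:
  fixes f :: "int poly" and c :: int
  assumes p: "prime p" and df: "degree f \<ge> 1" and lf: "\<not> int p dvd lead_coeff f"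
  shows "[:int p:] dvd ([:c:] - f * Q) \<Longrightarrow> int p dvd c"
proof (induction "if Q = 0 then 0 else Suc (degree Q)" arbitrary: Q rule: less_induct)
  case less
  show ?case
  proof (cases "Q = 0")
    case True then show ?thesis using less.prems by simp
  next
    case Q0: False
    show ?thesis
    proof (cases "int p dvd lead_coeff Q")
      case True
      then obtain b where b: "lead_coeff Q = int p * b" by blast
      define Q' where "Q' = Q - monom (lead_coeff Q) (degree Q)"
      have mb: "monom (lead_coeff Q) (degree Q) = [:int p:] * monom b (degree Q)"
        by (simp add: b smult_monom[symmetric])
      have "[:c:] - f * Q' = ([:c:] - f*Q) + [:int p:] * (f * monom b (degree Q))"
        by (simp add: Q'_def mb algebra_simps)
      hence dvd: "[:int p:] dvd ([:c:] - f * Q')" using less.prems by (metis dvd_add dvd_triv_left)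
      have cQ': "coeff Q' (degree Q) = 0" by (simp add: Q'_def)
      have dQ': "degree Q' \<le> degree Q" unfolding Q'_def
        by (meson degree_diff_le degree_monom_le order_refl)
      have "Q' = 0 \<or> degree Q' < degree Q"
      proof (cases "Q' = 0")
        case False
        hence "degree Q' \<noteq> degree Q" using cQ' by (metis leading_coeff_0_iff)
        thus ?thesis using dQ' by simp
      qed simp
      hence "(if Q' = 0 then 0 else Suc (degree Q')) < (if Q = 0 then 0 else Suc (degree Q))"
        using Q0 by auto
      then show ?thesis using less.hyps dvd by blast
    next
      case False
      have f0: "f \<noteq> 0" using df by auto
      have "coeff ([:c:] - f*Q) (degree f + degree Q) = - (lead_coeff f * lead_coeff Q)"
        using df by (simp add: coeff_mult_degree_sum coeff_pCons split: nat.split)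
      moreover have "int p dvd coeff ([:c:] - f*Q) (degree f + degree Q)"
        using less.prems const_poly_dvd_iff by blast
      ultimately have "int p dvd lead_coeff f * lead_coeff Q" by simp
      moreover have "prime (int p)" using p by (simp add: prime_nat_int_transfer)
      ultimately show ?thesis using lf False prime_dvd_mult_iff by blast
    qed
  qed
qed

lemma min_poly_exists:
  assumes Fz: "poly (C F) z = 0" and F0: "F \<noteq> 0"
  obtains f where "f \<noteq> 0" "poly (C f) z = 0" "content f = 1"
     "\<And>g. poly (C g) z = 0 \<Longrightarrow> f dvd g"
proof -
  define P where "P d \<longleftrightarrow> (\<exists>g. g \<noteq> 0 \<and> poly (C g) z = 0 \<and> degree g = d)" for d
  have "P (degree F)" using assms unfolding P_def by blast
  define d where "d = (LEAST d. P d)"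
  have "P d" unfolding d_def by (rule LeastI) fact
  then obtain g where g: "g \<noteq> 0" "poly (C g) z = 0" "degree g = d" unfolding P_def by blast
  have min: "d \<le> degree g'" if "g' \<noteq> 0" "poly (C g') z = 0" for g'
    unfolding d_def by (rule Least_le) (use that in \<open>auto simp: P_def\<close>)
  define f where "f = primitive_part g"
  have f0: "f \<noteq> 0" using g by (simp add: f_def)
  have cg: "content g \<noteq> 0" using g by simp
  have "poly (C g) z = of_int (content g) * poly (C f) z"
    by (metis content_times_primitive_part C_smult poly_smult f_def)
  hence fz: "poly (C f) z = 0" using g cg by simp
  have df: "degree f = d" using g by (simp add: f_def)
  have cf: "content f = 1" using g by (simp add: f_def content_primitive_part)
  have dvd: "f dvd h" if hz: "poly (C h) z = 0" for h
  proof -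
    obtain q r where qr: "pseudo_divmod h f = (q, r)" by (cases "pseudo_divmod h f")
    define c where "c = lead_coeff f ^ (Suc (degree h) - degree f)"
    from pseudo_divmod[OF f0 qr] have e: "smult c h = f * q + r"
      and r: "r = 0 \<or> degree r < degree f" by (auto simp: c_def)
    have c0: "c \<noteq> 0" using f0 by (simp add: c_def)
    have re: "r = smult c h - f * q" using e by (simp add: algebra_simps)
    have "poly (C r) z = 0" using hz fz by (simp add: re)
    hence "r = 0" using r min[of r] df by force
    hence "f dvd smult c h" using e by simp
    hence "fract_poly f dvd smult (to_fract c) (fract_poly h)" by (metis fract_poly_dvd fract_poly_smult)
    hence "fract_poly f dvd fract_poly h" using c0 by (simp add: dvd_smult_cancel)
    thus "f dvd h" using cf by (rule fract_poly_dvdD)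
  qed
  show ?thesis using f0 fz cf dvd that by blast
qed

lemma root_pow_prime:
  fixes F :: "int poly" and z :: complex
  assumes m: "m > 0" "z ^ m = 1" and p: "prime p" "\<not> p dvd m" and Fz: "poly (C F) z = 0"
  shows "poly (C F) (z ^ p) = 0"
proof (rule ccontr)
  assume nz: "poly (C F) (z ^ p) \<noteq> 0"
  define X :: "int poly" where "X = monom 1 m - 1"
  have cX: "coeff X m = 1" using m by (simp add: X_def coeff_1)
  have X0: "X \<noteq> 0" using cX by auto
  have Xz: "poly (C X) z = 0" using m by (simp add: X_def poly_monom)
  obtain f where f0: "f \<noteq> 0" and fz: "poly (C f) z = 0" and cf: "content f = 1"
    and fdvd: "\<And>g. poly (C g) z = 0 \<Longrightarrow> f dvd g"
    using min_poly_exists[OF Xz X0] by blast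
  obtain h where Xfh: "X = f * h" using fdvd[OF Xz] by blast
  obtain k where Ffk: "F = f * k" using fdvd[OF Fz] by blast
  have fzp: "poly (C f) (z^p) \<noteq> 0" using nz by (simp add: Ffk)
  have "poly (C X) (z^p) = 0" using m by (simp add: X_def poly_monom power_mult[symmetric] mult.commute[of p m]) (simp add: power_mult)
  hence hzp: "poly (C h) (z^p) = 0" using fzp Xfh by simp
  define H where "H = pcompose h (monom 1 p)"
  have "poly (C H) z = 0" using hzp by (simp add: H_def C_pcompose poly_pcompose poly_monom)
  then obtain S where HS: "H = f * S" using fdvd by blast
  have "degree X \<le> m" unfolding X_def using m
    by (intro degree_diff_le) (auto intro: degree_monom_le)
  moreover have "m \<le> degree X" using cX by (intro le_degree) simp
  ultimately have dX: "degree X = m" by simp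
  have lX: "lead_coeff X = 1" using dX cX by simp
  have "lead_coeff f * lead_coeff h = 1" using lX Xfh lead_coeff_mult by metis
  hence lf: "lead_coeff f = 1 \<or> lead_coeff f = -1" using zmult_eq_1_iff by blast
  have p1: "p > 1" using p prime_gt_1_nat by blast
  have ndvd: "\<not> int p dvd lead_coeff f"
  proof
    assume "int p dvd lead_coeff f"
    hence "int p dvd 1" using lf by auto
    thus False using p1 by simp
  qed
  have df: "degree f \<ge> 1"
  proof (rule ccontr)
    assume "\<not> degree f \<ge> 1"
    hence "degree f = 0" by simp
    then obtain c where "f = [:c:]" using degree_eq_zeroE by blast
    thus False using f0 fz by simp
  qed
  define U where "U = monom 1 1 * pderiv f - smult (int m) f"
  define V where "V = monom 1 1 * pderiv h"
  have id: "[:int m:] = h * U + f * V"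
  proof -
    have "pderiv X = monom (int m) (m - 1)" by (simp add: X_def pderiv_diff pderiv_monom)
    hence e1: "f * pderiv h + h * pderiv f = monom (int m) (m - 1)" using Xfh pderiv_mult by metis
    have e2: "monom 1 1 * monom (int m) (m-1) = monom (int m) m" using m by (simp add: mult_monom)
    have e3: "smult (int m) X = monom (int m) m - [:int m:]" by (simp add: X_def smult_diff_right smult_monom one_pCons)
    have "h * U + f * V = monom 1 1 * (f * pderiv h + h * pderiv f) - smult (int m) (f * h)"
      by (simp add: U_def V_def algebra_simps)
    also have "\<dots> = [:int m:]" using e1 e2 e3 Xfh by simp
    finally show ?thesis by simp
  qed
  have "f * V dvd ((h*U + f*V)^p - (h*U)^p)" using diff_dvd_power_diff[of "h*U + f*V" "h*U" p] by simp
  then obtain W0 where W0: "(h*U + f*V)^p - (h*U)^p = f * V * W0" by blast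
  obtain R where R: "h^p - H = [:int p:] * R" using frob[OF p(1), of h] H_def by blast
  have "[:int m:]^p = (h*U + f*V)^p" using id by simp
  also have "\<dots> = f * V * W0 + h^p * U^p" using W0 by (simp add: algebra_simps power_mult_distrib)
  also have "\<dots> = f * V * W0 + (f * S + [:int p:] * R) * U^p" using R HS by (simp add: algebra_simps)
  finally have "[:int m ^ p:] = f * (V * W0 + S * U^p) + [:int p:] * (R * U^p)"
    by (simp add: algebra_simps poly_const_pow)
  hence "[:int m ^ p:] - f * (V * W0 + S * U^p) = [:int p:] * (R * U^p)" by (simp add: algebra_simps)
  hence "[:int p:] dvd ([:int m ^ p:] - f * (V * W0 + S * U^p))" by (metis dvd_triv_left)
  hence "int p dvd int m ^ p" using lemL[OF p(1) df ndvd] by blast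
  moreover have pi: "prime (int p)" using p(1) by (simp add: prime_nat_int_transfer)
  ultimately have "int p dvd int m" using prime_dvd_power by metis
  thus False using p(2) by simp
qed

lemma root_pow_coprime:
  fixes F :: "int poly" and z :: complex
  assumes m: "m > 1" "z ^ m = 1" and Fz: "poly (C F) z = 0"
  shows "coprime t m \<Longrightarrow> poly (C F) (z ^ t) = 0"
proof (induction t rule: less_induct)
  case (less t)
  consider "t = 0" | "t = 1" | "t > 1" by linarith
  then show ?case
  proof cases
    case 1 then show ?thesis using less.prems m by simp
  next
    case 2 then show ?thesis using Fz by simp
  next
    case 3
    obtain q where q: "prime q" "q dvd t" using prime_factor_nat[of t] 3 by auto
    obtain t' where t': "t = q * t'" using q by blast
    have q1: "q > 1" using q prime_gt_1_nat by blast
    have "t' > 0" using 3 t' by (cases t') auto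
    hence "t' < t" using t' q1 by simp
    moreover have "coprime t' m" using less.prems t' by simp
    ultimately have IH: "poly (C F) (z ^ t') = 0" using less.IH by blast
    have "\<not> q dvd m"
    proof
      assume "q dvd m"
      hence "q dvd gcd t m" using q by simp
      moreover have "gcd t m = 1" using less.prems by (simp add: coprime_iff_gcd_eq_1)
      ultimately show False using q1 by simp
    qed
    moreover have "(z ^ t') ^ m = 1" using m by (metis mult.commute power_mult power_one)
    ultimately have "poly (C F) ((z ^ t') ^ q) = 0"
      using root_pow_prime[of m "z ^ t'" q F] m q IH by simp
    thus ?thesis using t' by (simp add: power_mult[symmetric] mult.commute)
  qed
qed



lemma cis_pi_nat: "cis (pi * real j) = (-1) ^ j"
proof -
  have "cis pi ^ j = cis (real j * pi)" by (rule DeMoivre)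
  thus ?thesis by (simp add: mult.commute)
qed

lemma root_to_omega:
  fixes z :: complex
  assumes i1: "i \<ge> 1" and zi: "z ^ i = -1"
  obtains k t where "k \<ge> 1" "k dvd i" "z ^ (2*k) = 1" "coprime t (2*k)" "z ^ t = cis (pi / k)"
proof -
  have "z ^ (2*i) = 1" using zi by (simp add: power_mult mult.commute[of 2 i])
  hence "z \<in> (\<lambda>k. cis (2 * pi * real k / real (2*i))) ` {..<2*i}"
    using bij_betw_imp_surj_on[OF bij_betw_roots_unity[of "2*i"]] i1 by auto
  then obtain j where j: "z = cis (2 * pi * real j / real (2*i))" by auto
  have zj: "z = cis (pi * real j / real i)" using j i1 by simp
  have "z ^ i = cis (real i * (pi * real j / real i))" using zj DeMoivre by simp
  also have "\<dots> = cis (pi * real j)" using i1 by simp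
  also have "\<dots> = (-1) ^ j" by (rule cis_pi_nat)
  finally have "(-1::complex) ^ j = -1" using zi by simp
  hence oj: "odd j" by (cases "even j") simp_all
  define g where "g = gcd j i"
  have g0: "g > 0" using i1 by (simp add: g_def)
  define a where "a = j div g"
  define k where "k = i div g"
  have ja: "j = a * g" by (simp add: a_def g_def)
  have ik: "i = k * g" by (simp add: k_def g_def)
  have cop: "coprime a k" unfolding a_def k_def g_def using i1 by (intro div_gcd_coprime) auto
  have oa: "odd a" using oj ja by simp
  have cop2: "coprime a (2*k)" using cop oa by simp
  have k1: "k \<ge> 1" using ik i1 by (cases k) auto
  have kdvd: "k dvd i" using ik by simp
  define w where "w = cis (pi / real k)"
  have "pi * real j / real i = real a * (pi / real k)" using g0 by (simp add: ja ik field_simps)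
  hence zw: "z = w ^ a" by (simp add: zj w_def DeMoivre)
  have w2k: "w ^ (2*k) = 1" using k1 by (simp add: w_def DeMoivre)
  have z2k: "z ^ (2*k) = 1" using w2k by (simp add: zw power_mult[symmetric] mult.commute[of a]) (simp add: power_mult)
  have a0: "a \<noteq> 0" using oa by (metis even_zero)
  obtain x y where xy: "a * x = (2*k) * y + gcd a (2*k)" using bezout_nat[OF a0] by blast
  hence xy1: "a * x = (2*k) * y + 1" using cop2 by simp
  have "z ^ x = w ^ (a * x)" by (simp add: zw power_mult)
  also have "\<dots> = (w ^ (2*k)) ^ y * w" by (simp add: xy1 power_add power_mult)
  also have "\<dots> = w" using w2k by simp
  finally have zx: "z ^ x = w" .
  have copx: "coprime x (2*k)"
  proof (rule coprimeI)
    fix d assume "d dvd x" "d dvd 2*k"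
    hence "d dvd a * x" "d dvd (2*k) * y" by auto
    hence "d dvd 1" using xy1 by (metis add_diff_cancel_left' dvd_diff_nat)
    thus "is_unit d" by simp
  qed
  show ?thesis using that[OF k1 kdvd z2k copx] zx w_def by simp
qed

lemma order_prod_gen:
  fixes P :: "'b \<Rightarrow> 'a::idom poly"
  shows "finite A \<Longrightarrow> (\<forall>i\<in>A. P i \<noteq> 0) \<Longrightarrow> order x (\<Prod>i\<in>A. P i) = (\<Sum>i\<in>A. order x (P i))"
proof (induction A rule: finite_induct)
  case empty then show ?case by simp
next
  case (insert a A)
  have "(\<Prod>i\<in>A. P i) \<noteq> 0" using insert by simp
  hence "P a * (\<Prod>i\<in>A. P i) \<noteq> 0" using insert by simp
  then show ?case using insert by (simp add: order_mult)
qed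

lemma order_power_gen:
  fixes p :: "'a::idom poly"
  shows "p \<noteq> 0 \<Longrightarrow> order x (p ^ n) = n * order x p"
  by (induction n) (simp_all add: order_mult)

lemma onepx_nz[simp]: "onepx i \<noteq> 0"
proof -
  have "coeff (onepx i) 0 \<noteq> 0" by (simp add: onepx_def coeff_monom)
  thus ?thesis by auto
qed

lemma poly_C_onepx: "poly (C (onepx i)) w = 1 + w ^ i"
  by (simp add: onepx_def poly_monom)

lemma order_onepx:
  assumes i1: "i \<ge> 1"
  shows "order w (C (onepx i)) = (if w ^ i = -1 then 1 else 0)"
proof (cases "w ^ i = -1")
  case False
  hence "poly (C (onepx i)) w \<noteq> 0" by (simp add: poly_C_onepx add_eq_0_iff)
  then show ?thesis using False by (simp add: order_0I)
next
  case True
  have w0: "w \<noteq> 0" using True i1 by (cases i) auto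
  have nz: "C (onepx i) \<noteq> 0" by simp
  have r: "poly (C (onepx i)) w = 0" using True by (simp add: poly_C_onepx)
  have "pderiv (C (onepx i)) = monom (of_nat i) (i - 1)"
    by (simp add: onepx_def pderiv_add pderiv_monom)
  hence "poly (pderiv (C (onepx i))) w \<noteq> 0" using w0 i1 by (simp add: poly_monom)
  hence "order w (pderiv (C (onepx i))) = 0" by (rule order_0I)
  then show ?thesis using order_pderiv[OF nz r] True by simp
qed



lemma sum_mset_count:
  fixes f :: "nat \<Rightarrow> nat"
  assumes "finite A"
  shows "set_mset M \<subseteq> A \<Longrightarrow> (\<Sum>x\<in>#M. f x) = (\<Sum>i\<in>A. f i * count M i)"
proof (induction M)
  case empty then show ?case by simp
next
  case (add x M)
  have xA: "x \<in> A" using add.prems by simp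
  have "(\<Sum>i\<in>A. f i * count (add_mset x M) i) = (\<Sum>i\<in>A. f i * count M i + (if i = x then f i else 0))"
    by (intro sum.cong) auto
  also have "\<dots> = (\<Sum>i\<in>A. f i * count M i) + f x" using assms xA by (simp add: sum.distrib)
  finally show ?case using add by simp
qed

lemma part_set: "lam \<in> partitions n \<Longrightarrow> set_mset lam \<subseteq> {1..n}"
proof
  fix x assume l: "lam \<in> partitions n" and x: "x \<in> set_mset lam"
  have "0 < x" using l x by (auto simp: partitions_def)
  moreover have "sum_mset lam = x + sum_mset (lam - {#x#})" using x by (simp add: sum_mset.remove)
  hence "x \<le> n" using l by (auto simp: partitions_def)
  ultimately show "x \<in> {1..n}" by simp
qed

lemma part_sum: "lam \<in> partitions n \<Longrightarrow> n = (\<Sum>i\<in>{1..n}. i * count lam i)"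
proof -
  assume l: "lam \<in> partitions n"
  have "n = (\<Sum>x\<in>#lam. x)" using l by (simp add: partitions_def)
  also have "\<dots> = (\<Sum>i\<in>{1..n}. i * count lam i)"
    using sum_mset_count[of "{1..n}" lam "\<lambda>x. x"] part_set[OF l] by simp
  finally show ?thesis .
qed

lemma part_count: assumes l: "lam \<in> partitions n" and i: "i \<ge> 1"
  shows "count lam i \<le> n div i"
proof (cases "i \<le> n")
  case True
  have "i * count lam i \<le> (\<Sum>i\<in>{1..n}. i * count lam i)"
    using True i by (intro member_le_sum) auto
  hence "count lam i * i \<le> n" using part_sum[OF l] by (simp add: mult.commute)
  thus ?thesis using i by (simp add: less_eq_div_iff_mult_less_eq)
next
  case False
  hence "i \<notin> set_mset lam" using part_set[OF l] by auto
  thus ?thesis by (simp add: not_in_iff)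
qed

lemma finite_partitions: "finite (partitions n)"
proof (rule finite_subset)
  show "partitions n \<subseteq> (\<Union>s\<in>{..n}. multisets_of_size {1..n} s)"
  proof
    fix lam assume l: "lam \<in> partitions n"
    have "size lam = (\<Sum>x\<in>#lam. 1)" by (rule size_eq_sum_mset)
    also have "\<dots> = (\<Sum>i\<in>{1..n}. count lam i)"
      using sum_mset_count[of "{1..n}" lam "\<lambda>x. 1"] part_set[OF l] by simp
    also have "\<dots> \<le> (\<Sum>i\<in>{1..n}. i * count lam i)" by (intro sum_mono) auto
    also have "\<dots> = n" using part_sum[OF l] by simp
    finally show "lam \<in> (\<Union>s\<in>{..n}. multisets_of_size {1..n} s)"
      using part_set[OF l] by (auto simp: multisets_of_size_def)
  qed
  show "finite (\<Union>s\<in>{..n}. multisets_of_size {1..n} s)" by auto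
qed

lemma omega_pow:
  assumes k1: "k \<ge> 1"
  shows "cis (pi / real k) ^ i = -1 \<longleftrightarrow> (k dvd i \<and> odd (i div k))"
proof -
  define q where "q = i div k"
  define r where "r = i mod k"
  have kq: "real i = real q * real k + real r" unfolding q_def r_def
    by (metis div_mult_mod_eq of_nat_add of_nat_mult)
  have "cis (pi / real k) ^ i = cis (real i * (pi / real k))" by (rule DeMoivre)
  also have "real i * (pi / real k) = pi * real q + pi * real r / real k"
    using k1 by (simp add: kq field_simps)
  finally have e: "cis (pi / real k) ^ i = (-1) ^ q * cis (pi * real r / real k)"
    by (simp add: cis_mult[symmetric] cis_pi_nat)
  show ?thesis
  proof (cases "r = 0")
    case True
    hence "k dvd i" by (simp add: r_def dvd_eq_mod_eq_0)
    moreover have "(-1::complex) ^ q = -1 \<longleftrightarrow> odd q" by (cases "even q") simp_all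
    ultimately show ?thesis using e True by (simp add: q_def)
  next
    case False
    hence nd: "\<not> k dvd i" by (simp add: r_def dvd_eq_mod_eq_0)
    have "r < k" using k1 by (simp add: r_def)
    hence "pi * real r / real k < pi" using k1 by (simp add: field_simps)
    moreover have "0 < pi * real r / real k" using False k1 by simp
    ultimately have sp: "sin (pi * real r / real k) > 0" by (intro sin_gt_zero) auto
    have "cis (pi / real k) ^ i \<noteq> -1"
    proof
      assume "cis (pi / real k) ^ i = -1"
      hence h: "(-1) ^ q * cis (pi * real r / real k) = -1" using e by simp
      have "cis (pi * real r / real k) = - ((-1) ^ q)"
      proof -
        have "(-1) ^ q * ((-1) ^ q * cis (pi * real r / real k)) = (-1) ^ q * (-1 :: complex)"
          using h by simp
        thus ?thesis by (simp add: mult.assoc[symmetric] power_mult_distrib[symmetric])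
      qed
      hence "Im (cis (pi * real r / real k)) = 0" by (cases "even q") simp_all
      thus False using sp by simp
    qed
    then show ?thesis using nd by simp
  qed
qed

definition Sset :: "nat \<Rightarrow> nat \<Rightarrow> nat set" where
  "Sset n k = {i \<in> {1..n}. k dvd i \<and> odd (i div k)}"

lemma finite_Sset[simp]: "finite (Sset n k)" by (simp add: Sset_def)

lemma order_h:
  assumes k1: "k \<ge> 1"
  shows "order (cis (pi / real k)) (C (h_part n lam)) = (\<Sum>i\<in>Sset n k. n div i - count lam i)"
proof -
  let ?w = "cis (pi / real k)"
  have "order ?w (C (h_part n lam)) = (\<Sum>i\<in>{1..n}. order ?w (C (onepx i) ^ (n div i - count lam i)))"
    unfolding h_part_def C_prod C_power by (rule order_prod_gen) auto
  also have "\<dots> = (\<Sum>i\<in>{1..n}. if k dvd i \<and> odd (i div k) then n div i - count lam i else 0)"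
    by (intro sum.cong refl) (auto simp: order_power_gen order_onepx omega_pow[OF k1] Sset_def)
  also have "\<dots> = (\<Sum>i\<in>Sset n k. n div i - count lam i)"
    unfolding Sset_def by (rule sum.inter_filter[symmetric]) simp
  finally show ?thesis .
qed



definition cntS :: "nat \<Rightarrow> nat \<Rightarrow> nat multiset \<Rightarrow> nat" where
  "cntS n k lam = (\<Sum>i\<in>Sset n k. count lam i)"

definition lamf :: "nat \<Rightarrow> nat \<Rightarrow> nat multiset \<Rightarrow> nat multiset" where
  "lamf n k mu = replicate_mset (n div k) k + mu"

lemma Sset_prop:
  assumes k1: "1 \<le> k" and i: "i \<in> Sset n k"
  shows "k \<le> i" "i \<noteq> k \<Longrightarrow> 3 * k \<le> i" "1 \<le> i" "i \<le> n"
proof -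
  from i have dv: "k dvd i" and od: "odd (i div k)" and i1: "1 \<le> i" and iN: "i \<le> n"
    by (auto simp: Sset_def)
  obtain j where ij: "i = k * j" using dv by blast
  have jd: "i div k = j" using k1 ij by simp
  have oj: "odd j" using od jd by simp
  hence j1: "j \<ge> 1" by (cases j) auto
  show "k \<le> i" using ij j1 by simp
  show "3 * k \<le> i" if "i \<noteq> k"
  proof -
    have "j \<noteq> 1" using that ij by auto
    moreover have "j \<noteq> 0" using oj by (metis even_zero)
    moreover have "j \<noteq> 2" using oj by auto
    ultimately have "j \<noteq> 2" "j \<noteq> 1" "j \<noteq> 0" by auto
    hence "j \<ge> 3" by linarith
    thus ?thesis using ij by simp
  qed
  show "1 \<le> i" "i \<le> n" using i1 iN by auto
qed

lemma k_in_Sset: "1 \<le> k \<Longrightarrow> k \<le> n \<Longrightarrow> k \<in> Sset n k"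
  by (auto simp: Sset_def)

lemma cnt_bound:
  assumes k1: "1 \<le> k" and kn: "k \<le> n" and l: "lam \<in> partitions n"
  shows "k * count lam k + 3 * k * (cntS n k lam - count lam k) \<le> n"
    and "count lam k \<le> cntS n k lam"
proof -
  let ?S = "Sset n k"
  define rest where "rest = (\<Sum>i\<in>?S - {k}. count lam i)"
  have kS: "k \<in> ?S" using k1 kn by (rule k_in_Sset)
  have c: "cntS n k lam = count lam k + rest"
    unfolding cntS_def rest_def using kS by (simp add: sum.remove)
  have "(\<Sum>i\<in>?S. i * count lam i) = k * count lam k + (\<Sum>i\<in>?S - {k}. i * count lam i)"
    using kS by (simp add: sum.remove)
  moreover have "(\<Sum>i\<in>?S - {k}. 3 * k * count lam i) \<le> (\<Sum>i\<in>?S - {k}. i * count lam i)"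
    by (intro sum_mono mult_right_mono) (use Sset_prop[OF k1] in auto)
  moreover have "(\<Sum>i\<in>?S - {k}. 3 * k * count lam i) = 3 * k * rest"
    by (simp add: rest_def sum_distrib_left)
  moreover have "(\<Sum>i\<in>?S. i * count lam i) \<le> (\<Sum>i\<in>{1..n}. i * count lam i)"
    by (intro sum_mono2) (auto simp: Sset_def)
  moreover have "(\<Sum>i\<in>{1..n}. i * count lam i) = n" using part_sum[OF l] by simp
  ultimately show "k * count lam k + 3 * k * (cntS n k lam - count lam k) \<le> n"
    using c by simp
  show "count lam k \<le> cntS n k lam" using c by simp
qed

lemma cntS_le:
  assumes k1: "1 \<le> k" and kn: "k \<le> n" and l: "lam \<in> partitions n"
  shows "cntS n k lam \<le> n div k"
proof -
  note cb = cnt_bound[OF k1 kn l]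
  obtain d where d: "cntS n k lam = count lam k + d" using cb(2) le_iff_add by blast
  have "cntS n k lam * k \<le> k * count lam k + 3 * k * (cntS n k lam - count lam k)"
    unfolding d by (simp add: algebra_simps)
  thus ?thesis using cb(1) k1 by (simp add: less_eq_div_iff_mult_less_eq)
qed

lemma lamf_props:
  assumes k1: "1 \<le> k" and kn: "k \<le> n" and mu: "mu \<in> partitions (n mod k)"
  shows "lamf n k mu \<in> partitions n" "cntS n k (lamf n k mu) = n div k"
    "\<And>i. k \<le> i \<Longrightarrow> count mu i = 0"
proof -
  have ps: "set_mset mu \<subseteq> {1..n mod k}" by (rule part_set[OF mu])
  have rk: "n mod k < k" using k1 by simp
  show c0: "count mu i = 0" if "k \<le> i" for i
  proof -
    have "i \<notin> set_mset mu" using ps that rk by auto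
    thus ?thesis by (simp add: not_in_iff)
  qed
  have "sum_mset (lamf n k mu) = (n div k) * k + sum_mset mu" by (simp add: lamf_def)
  also have "\<dots> = n" using mu by (simp add: partitions_def)
  finally show "lamf n k mu \<in> partitions n" using mu k1 by (auto simp: partitions_def lamf_def)
  have kS: "k \<in> Sset n k" using k1 kn by (rule k_in_Sset)
  have "cntS n k (lamf n k mu) = (\<Sum>i\<in>Sset n k. (if i = k then n div k else 0) + count mu i)"
    unfolding cntS_def lamf_def by (intro sum.cong) auto
  also have "\<dots> = (\<Sum>i\<in>Sset n k. (if i = k then n div k else 0))"
    by (intro sum.cong refl) (use c0 Sset_prop(1)[OF k1] in auto)
  also have "\<dots> = n div k" using kS by simp
  finally show "cntS n k (lamf n k mu) = n div k" .
qed

lemma lamf_inj: "inj_on (lamf n k) A"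
  by (intro inj_onI) (simp add: lamf_def)

lemma min_char:
  assumes k1: "1 \<le> k" and kn: "k \<le> n" and l: "lam \<in> partitions n" and c: "cntS n k lam = n div k"
  shows "lam \<in> lamf n k ` partitions (n mod k)"
proof -
  note cb = cnt_bound[OF k1 kn l]
  define q where "q = n div k"
  define ck where "ck = count lam k"
  define rest where "rest = q - ck"
  have qr: "q = ck + rest" using cb(2) c by (simp add: q_def ck_def rest_def)
  have "n < k * q + k" using k1 unfolding q_def
    by (metis add.commute add_less_cancel_left div_mult_mod_eq mod_less_divisor mult.commute
        less_le_trans order_refl zero_less_one le_less_trans)
  moreover have "k * ck + 3 * k * rest \<le> n" using cb(1) c by (simp add: q_def ck_def rest_def)
  ultimately have "k * ck + 3 * k * rest < k * q + k" by linarith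
  also have "k * q + k = k * ck + k * (rest + 1)" using qr by (simp add: algebra_simps)
  finally have "k * (3 * rest) < k * (rest + 1)" by (simp add: algebra_simps)
  hence "3 * rest < rest + 1" by (simp add: mult_less_cancel1)
  hence "rest = 0" by simp
  hence ckq: "ck = q" using qr by simp
  define mu where "mu = filter_mset (\<lambda>x. x \<noteq> k) lam"
  have lm: "lam = replicate_mset q k + mu"
    by (rule multiset_eqI) (auto simp: mu_def ckq[symmetric] ck_def)
  have "sum_mset lam = q * k + sum_mset mu" by (subst lm) simp
  moreover have "n = q * k + n mod k" unfolding q_def by simp
  ultimately have "sum_mset mu = n mod k" using l by (simp add: partitions_def)
  moreover have "\<forall>i\<in>#mu. 0 < i" using l by (auto simp: mu_def partitions_def)
  ultimately have "mu \<in> partitions (n mod k)" by (simp add: partitions_def)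
  moreover have "lam = lamf n k mu" using lm by (simp add: lamf_def q_def)
  ultimately show ?thesis by blast
qed



lemma onepx_k_dvd:
  assumes k1: "1 \<le> k" and i: "i \<in> Sset n k"
  shows "onepx k dvd onepx i"
proof -
  from i have dv: "k dvd i" and od: "odd (i div k)" by (auto simp: Sset_def)
  obtain j where ij: "i = k * j" using dv by blast
  have oj: "odd j" using od ij k1 by simp
  let ?y = "monom (1::int) k"
  have "(?y - (-1)) dvd (?y ^ j - (-1) ^ j)" by (rule diff_dvd_power_diff)
  moreover have "?y - (-1) = onepx k" by (simp add: onepx_def)
  moreover have "?y ^ j - (-1) ^ j = onepx i" using oj by (simp add: onepx_def ij monom_power)
  ultimately show ?thesis by simp
qed

lemma h_dvd:
  assumes k1: "1 \<le> k"
  shows "onepx k ^ (\<Sum>i\<in>Sset n k. n div i - count lam i) dvd h_part n lam"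
proof -
  have "onepx k ^ (\<Sum>i\<in>Sset n k. n div i - count lam i) = (\<Prod>i\<in>Sset n k. onepx k ^ (n div i - count lam i))"
    by (rule power_sum)
  also have "\<dots> dvd (\<Prod>i\<in>Sset n k. onepx i ^ (n div i - count lam i))"
    by (intro prod_dvd_prod dvd_power_same onepx_k_dvd[OF k1])
  also have "\<dots> dvd h_part n lam" unfolding h_part_def
    by (intro prod_dvd_prod_subset) (auto simp: Sset_def)
  finally show ?thesis .
qed

lemma order_dvd_le:
  fixes p q :: "'a::idom poly"
  assumes "p dvd q" "q \<noteq> 0"
  shows "order x p \<le> order x q"
proof -
  obtain r where "q = p * r" using assms(1) by blast
  thus ?thesis using assms(2) order_mult by (metis le_add1)
qed

lemma one_plus_cis:
  assumes k1: "1 \<le> k"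
  shows "1 + cis (pi / real k) ^ i = complex_of_real (2 * cos (real i * pi / (2 * real k))) * cis (pi / (2 * real k)) ^ i"
proof -
  define t where "t = real i * pi / (2 * real k)"
  have a: "cis (pi / real k) ^ i = cis (2 * t)" using k1 by (simp add: DeMoivre t_def)
  have b: "cis (pi / (2 * real k)) ^ i = cis t" using k1 by (simp add: DeMoivre t_def)
  have "1 + cis (2 * t) = complex_of_real (2 * cos t) * cis t"
    by (simp add: complex_eq_iff cos_double_cos sin_double power2_eq_square)
  thus ?thesis using a b t_def by simp
qed

definition Vp :: "nat \<Rightarrow> nat multiset \<Rightarrow> int poly" where
  "Vp n mu = (\<Prod>i\<in>{1..n}. onepx i ^ count mu i)"

definition Pw :: "nat \<Rightarrow> nat \<Rightarrow> nat multiset \<Rightarrow> real" where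
  "Pw n k mu = (\<Prod>i\<in>{1..n}. (2 * cos (real i * pi / (2 * real k))) ^ count mu i)"

lemma Vp_eval:
  assumes k1: "1 \<le> k" and kn: "k \<le> n" and mu: "mu \<in> partitions (n mod k)"
  shows "poly (C (Vp n mu)) (cis (pi / real k)) = complex_of_real (Pw n k mu) * cis (pi / (2 * real k)) ^ (n mod k)"
    and "Pw n k mu > 0"
proof -
  let ?u = "cis (pi / (2 * real k))"
  let ?c = "\<lambda>i. 2 * cos (real i * pi / (2 * real k))"
  have ps: "set_mset mu \<subseteq> {1..n mod k}" by (rule part_set[OF mu])
  have rk: "n mod k < k" using k1 by simp
  have sub: "set_mset mu \<subseteq> {1..n}" using ps rk kn by auto
  have sumr: "(\<Sum>i\<in>{1..n}. i * count mu i) = n mod k"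
  proof -
    have "n mod k = (\<Sum>x\<in>#mu. x)" using mu by (simp add: partitions_def)
    also have "\<dots> = (\<Sum>i\<in>{1..n}. i * count mu i)"
      using sum_mset_count[of "{1..n}" mu "\<lambda>x. x"] sub by simp
    finally show ?thesis by simp
  qed
  have "poly (C (Vp n mu)) (cis (pi / real k)) = (\<Prod>i\<in>{1..n}. (1 + cis (pi / real k) ^ i) ^ count mu i)"
    by (simp add: Vp_def poly_prod poly_C_onepx)
  also have "\<dots> = (\<Prod>i\<in>{1..n}. complex_of_real (?c i ^ count mu i) * ?u ^ (i * count mu i))"
    by (intro prod.cong refl) (simp add: one_plus_cis[OF k1] power_mult_distrib power_mult)
  also have "\<dots> = complex_of_real (Pw n k mu) * ?u ^ (\<Sum>i\<in>{1..n}. i * count mu i)"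
    by (simp add: prod.distrib power_sum Pw_def)
  also have "\<dots> = complex_of_real (Pw n k mu) * ?u ^ (n mod k)" by (simp only: sumr)
  finally show "poly (C (Vp n mu)) (cis (pi / real k)) = complex_of_real (Pw n k mu) * ?u ^ (n mod k)" .
  show "Pw n k mu > 0" unfolding Pw_def
  proof (intro prod_pos)
    fix i assume i: "i \<in> {1..n}"
    show "0 < ?c i ^ count mu i"
    proof (cases "count mu i = 0")
      case False
      hence "i \<in> set_mset mu" by simp
      hence "1 \<le> i" "i < k" using ps rk by auto
      hence "0 < real i * pi / (2 * real k)" "real i * pi / (2 * real k) < pi / 2"
        using k1 by (auto simp: field_simps)
      hence "0 < cos (real i * pi / (2 * real k))" by (intro cos_gt_zero_pi) auto
      thus ?thesis by simp
    qed simp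
  qed
qed

lemma h_lamf:
  assumes k1: "1 \<le> k" and kn: "k \<le> n" and mu: "mu \<in> partitions (n mod k)"
  shows "h_part n (lamf n k mu) * Vp n mu = (\<Prod>i\<in>{1..n}. onepx i ^ (n div i - (if i = k then n div k else 0)))"
proof -
  have lp: "lamf n k mu \<in> partitions n" using lamf_props[OF k1 kn mu] by simp
  have cnt: "count (lamf n k mu) i = (if i = k then n div k else 0) + count mu i" for i
    by (simp add: lamf_def)
  show ?thesis unfolding h_part_def Vp_def prod.distrib[symmetric] power_add[symmetric]
  proof (intro prod.cong refl)
    fix i assume i: "i \<in> {1..n}"
    have "count (lamf n k mu) i \<le> n div i" using part_count[OF lp] i by simp
    thus "onepx i ^ (n div i - count (lamf n k mu) i + count mu i) =
          onepx i ^ (n div i - (if i = k then n div k else 0))" using cnt[of i] by simp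
  qed
qed



lemma num_nonzero:
  assumes k1: "1 \<le> k" and kn: "k \<le> n"
  shows "poly (C (num n)) (cis (pi / real k)) \<noteq> 0"
proof -
  define w where "w = cis (pi / real k)"
  define u where "u = cis (pi / (2 * real k))"
  define P where "P = partitions n"
  define Pr where "Pr = partitions (n mod k)"
  define S where "S = Sset n k"
  define q where "q = n div k"
  define r where "r = n mod k"
  define TS where "TS = (\<Sum>i\<in>S. n div i)"
  define E0 where "E0 = TS - q"
  define e where "e lam = (\<Sum>i\<in>S. n div i - count lam i)" for lam
  have finP: "finite P" unfolding P_def by (rule finite_partitions)
  have finPr: "finite Pr" unfolding Pr_def by (rule finite_partitions)
  have kS: "k \<in> S" unfolding S_def using k1 kn by (rule k_in_Sset)
  have qTS: "q \<le> TS" unfolding TS_def q_def using kS by (intro member_le_sum) (auto simp: S_def)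
  have e_eq: "e lam = TS - cntS n k lam" if l: "lam \<in> P" for lam
  proof -
    have "e lam = TS - (\<Sum>i\<in>S. count lam i)" unfolding e_def TS_def
      by (rule sum_subtractf_nat) (use part_count[of lam n] l Sset_prop(3)[OF k1] in \<open>auto simp: P_def S_def\<close>)
    thus ?thesis by (simp add: cntS_def S_def)
  qed
  have cle: "cntS n k lam \<le> q" if "lam \<in> P" for lam
    using cntS_le[OF k1 kn] that by (simp add: P_def q_def)
  have eE0: "E0 \<le> e lam" if "lam \<in> P" for lam
    using e_eq[OF that] cle[OF that] qTS by (simp add: E0_def)
  have order_h': "order w (C (h_part n lam)) = e lam" for lam
    using order_h[OF k1, of n lam] by (simp add: w_def e_def S_def)
  have h0: "h_part n lam \<noteq> 0" for lam by (simp add: h_part_def)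
  define mu0 where "mu0 = replicate_mset r (1::nat)"
  have mu0P: "mu0 \<in> Pr" by (auto simp: mu0_def Pr_def r_def partitions_def)
  define lam0 where "lam0 = lamf n k mu0"
  have lam0P: "lam0 \<in> P" using lamf_props(1)[OF k1 kn] mu0P by (simp add: lam0_def P_def Pr_def)
  have elam0: "e lam0 = E0" using e_eq[OF lam0P] lamf_props(2)[OF k1 kn] mu0P
    by (simp add: lam0_def Pr_def E0_def q_def)
  define GG where "GG = G n"
  have Gdvd: "GG dvd h_part n lam" if "lam \<in> P" for lam
    unfolding GG_def G_def P_def using that by (intro Gcd_dvd) (auto simp: P_def)
  have G0: "GG \<noteq> 0"
  proof
    assume "GG = 0"
    hence "h_part n lam0 = 0" using Gdvd[OF lam0P] by simp
    thus False using h0 by simp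
  qed
  have KG: "onepx k ^ E0 dvd GG" unfolding GG_def G_def
  proof (rule Gcd_greatest)
    fix b assume "b \<in> h_part n ` partitions n"
    then obtain lam where l: "lam \<in> P" and b: "b = h_part n lam" by (auto simp: P_def)
    have "onepx k ^ E0 dvd onepx k ^ e lam" using eE0[OF l] by (rule le_imp_power_dvd)
    also have "\<dots> dvd h_part n lam" using h_dvd[OF k1, of n lam] by (simp add: e_def S_def)
    finally show "onepx k ^ E0 dvd b" using b by simp
  qed
  define oG where "oG = order w (C GG)"
  have wk: "w ^ k = -1" using omega_pow[OF k1, of k] k1 by (simp add: w_def)
  have "order w (C (onepx k ^ E0)) = E0" using k1 wk by (simp add: order_power_gen order_onepx)
  moreover have "order w (C (onepx k ^ E0)) \<le> oG" unfolding oG_def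
    using KG G0 by (intro order_dvd_le C_dvd) auto
  ultimately have oG1: "E0 \<le> oG" by simp
  have "oG \<le> order w (C (h_part n lam0))" unfolding oG_def
    using Gdvd[OF lam0P] h0 by (intro order_dvd_le C_dvd) auto
  hence oGE: "oG = E0" using oG1 order_h'[of lam0] elam0 by simp
  define g where "g lam = h_part n lam div GG" for lam
  have hg: "h_part n lam = GG * g lam" if "lam \<in> P" for lam
    using Gdvd[OF that] by (simp add: g_def)
  have "(\<Sum>lam\<in>P. h_part n lam) = GG * (\<Sum>lam\<in>P. g lam)"
    by (simp add: sum_distrib_left hg)
  hence numg: "num n = (\<Sum>lam\<in>P. g lam)"
    unfolding num_def using G0 by (simp add: GG_def[symmetric] P_def[symmetric])
  have order_g: "order w (C (g lam)) = e lam - E0" if "lam \<in> P" for lam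
  proof -
    have "C (h_part n lam) = C GG * C (g lam)" using hg[OF that] by simp
    moreover have "C GG * C (g lam) \<noteq> 0" using h0 hg[OF that] by (metis C_eq_0_iff C_mult)
    ultimately have "order w (C (h_part n lam)) = oG + order w (C (g lam))"
      unfolding oG_def by (simp add: order_mult)
    thus ?thesis using order_h' oGE by simp
  qed
  have g0: "g lam \<noteq> 0" if "lam \<in> P" for lam using hg[OF that] h0 by auto
  have img: "lamf n k ` Pr \<subseteq> P" using lamf_props(1)[OF k1 kn] by (auto simp: Pr_def P_def)
  have vanish: "poly (C (g lam)) w = 0" if "lam \<in> P - lamf n k ` Pr" for lam
  proof -
    have l: "lam \<in> P" using that by simp
    have "cntS n k lam \<noteq> q"
    proof
      assume "cntS n k lam = q"
      hence "lam \<in> lamf n k ` Pr" using min_char[OF k1 kn] l by (simp add: P_def Pr_def q_def)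
      thus False using that by simp
    qed
    hence "cntS n k lam < q" using cle[OF l] by simp
    hence "e lam > E0" using e_eq[OF l] qTS by (simp add: E0_def)
    hence "order w (C (g lam)) \<noteq> 0" using order_g[OF l] by simp
    thus ?thesis using order_root by blast
  qed
  have "poly (C (num n)) w = (\<Sum>lam\<in>P. poly (C (g lam)) w)"
    by (simp add: numg poly_sum)
  also have "\<dots> = (\<Sum>lam\<in>lamf n k ` Pr. poly (C (g lam)) w)"
    using finP img vanish by (intro sum.mono_neutral_right) auto
  also have "\<dots> = (\<Sum>mu\<in>Pr. poly (C (g (lamf n k mu))) w)"
    by (simp add: sum.reindex lamf_inj)
  finally have s1: "poly (C (num n)) w = (\<Sum>mu\<in>Pr. poly (C (g (lamf n k mu))) w)" .
  define B where "B = (\<Prod>i\<in>{1..n}. onepx i ^ (n div i - (if i = k then n div k else 0)))"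
  have gV: "g (lamf n k mu) * Vp n mu = g lam0 * Vp n mu0" if "mu \<in> Pr" for mu
  proof -
    have lP: "lamf n k mu \<in> P" using img that by auto
    have "GG * (g (lamf n k mu) * Vp n mu) = B"
      using h_lamf[OF k1 kn, of mu] that hg[OF lP] by (simp add: B_def Pr_def mult.assoc)
    moreover have "GG * (g lam0 * Vp n mu0) = B"
      using h_lamf[OF k1 kn, of mu0] mu0P hg[OF lam0P] by (simp add: B_def Pr_def lam0_def mult.assoc)
    ultimately show ?thesis using G0 by (metis mult_left_cancel)
  qed
  have ord0: "order w (C (g lam0)) = 0" using order_g[OF lam0P] elam0 by simp
  have gl0: "poly (C (g lam0)) w \<noteq> 0" using ord0 g0[OF lam0P] by (simp add: order_root)
  have u0: "u \<noteq> 0" by (simp add: u_def)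
  define gam where "gam = poly (C (g lam0)) w * (complex_of_real (Pw n k mu0) * u ^ r)"
  have "Pw n k mu0 > 0" using Vp_eval(2)[OF k1 kn] mu0P by (simp add: Pr_def)
  hence gam0: "gam \<noteq> 0" using gl0 u0 by (simp add: gam_def)
  have each: "poly (C (g (lamf n k mu))) w = gam / u ^ r * complex_of_real (1 / Pw n k mu)" if "mu \<in> Pr" for mu
  proof -
    have pos: "Pw n k mu > 0" using Vp_eval(2)[OF k1 kn] that by (simp add: Pr_def)
    have "poly (C (g (lamf n k mu))) w * (complex_of_real (Pw n k mu) * u ^ r) = gam"
      using arg_cong[OF gV[OF that], of "\<lambda>p. poly (C p) w"] Vp_eval(1)[OF k1 kn] that mu0P
      by (simp add: gam_def Pr_def w_def u_def r_def)
    thus ?thesis using pos u0 by (simp add: field_simps)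
  qed
  define sR where "sR = (\<Sum>mu\<in>Pr. 1 / Pw n k mu)"
  have eq: "poly (C (num n)) w = gam / u ^ r * complex_of_real sR"
    unfolding sR_def using s1 each by (simp add: sum_distrib_left)
  have "sR > 0" unfolding sR_def
  proof (rule sum_pos)
    show "finite Pr" by (rule finPr)
    show "Pr \<noteq> {}" using mu0P by auto
    fix mu assume "mu \<in> Pr"
    thus "0 < 1 / Pw n k mu" using Vp_eval(2)[OF k1 kn] by (simp add: Pr_def)
  qed
  hence "complex_of_real sR \<noteq> 0" by simp
  hence "poly (C (num n)) w \<noteq> 0" using eq gam0 u0 by simp
  thus ?thesis by (simp add: w_def)
qed



theorem theorem1:
  fixes n :: nat
  assumes "1 \<le> n"
  shows "gcd (num n) (den n) = 1"
proof (rule ccontr)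
  assume ne: "gcd (num n) (den n) \<noteq> 1"
  define gg where "gg = gcd (num n) (den n)"
  define lam1 where "lam1 = replicate_mset n (1::nat)"
  have l1P: "lam1 \<in> partitions n" by (auto simp: lam1_def partitions_def)
  have hds: "h_part n lam dvd den_star n" for lam
    unfolding h_part_def den_star_def by (intro prod_dvd_prod le_imp_power_dvd) auto
  have Gd: "G n dvd den_star n"
    using Gcd_dvd[of "h_part n lam1" "h_part n ` partitions n"] l1P hds[of lam1]
    unfolding G_def by (meson dvd_trans imageI)
  have ds: "den_star n = G n * den n" unfolding den_def using Gd by simp
  have ds0: "den_star n \<noteq> 0" by (simp add: den_star_def)
  hence den0: "den n \<noteq> 0" using ds by auto
  hence gg0: "gg \<noteq> 0" by (simp add: gg_def)
  have "\<not> is_unit gg"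
  proof
    assume "is_unit gg"
    hence "normalize gg = 1" by (rule is_unit_normalize)
    thus False using ne by (simp add: gg_def)
  qed
  then obtain p where pg: "p dvd gg" and pp: "prime p" using prime_divisor_exists[OF gg0] by blast
  have pnum: "p dvd num n" using pg by (simp add: gg_def)
  have "p dvd den n" using pg by (simp add: gg_def)
  hence "p dvd den_star n" using ds by simp
  then obtain i where i: "i \<in> {1..n}" and "p dvd onepx i ^ (n div i)"
    unfolding den_star_def using pp by (auto simp: prime_dvd_prod_iff)
  hence pi: "p dvd onepx i" using pp prime_dvd_power by blast
  have dp: "degree p \<ge> 1"
  proof (rule ccontr)
    assume "\<not> degree p \<ge> 1"
    then obtain c where pc: "p = [:c:]" using degree_eq_zeroE by (metis less_one not_le)
    have "c dvd coeff (onepx i) 0" using pi pc const_poly_dvd_iff by blast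
    moreover have "coeff (onepx i) 0 = 1" using i by (simp add: onepx_def coeff_monom)
    ultimately have "is_unit c" by simp
    hence "is_unit p" using pc by (metis is_unit_const_poly_iff)
    thus False using pp by (simp add: not_prime_unit)
  qed
  have "\<not> (\<exists>a l. a \<noteq> 0 \<and> l = 0 \<and> C p = pCons a l)"
  proof
    assume "\<exists>a l. a \<noteq> 0 \<and> l = 0 \<and> C p = pCons a l"
    then obtain a where "C p = [:a:]" by blast
    hence "degree (C p) = 0" by simp
    thus False using dp by simp
  qed
  then obtain z where z: "poly (C p) z = 0" using fundamental_theorem_of_algebra_alt by blast
  have "poly (C (onepx i)) z = 0" using C_dvd[OF pi] z by (metis dvdE mult_zero_left poly_mult)
  hence zi: "z ^ i = -1" by (simp add: poly_C_onepx add_eq_0_iff)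
  obtain k t where k1: "k \<ge> 1" and kd: "k dvd i" and z2k: "z ^ (2*k) = 1"
    and ct: "coprime t (2*k)" and zt: "z ^ t = cis (pi / k)"
    using root_to_omega[of i z] i zi by auto
  have "poly (C p) (z ^ t) = 0" using root_pow_coprime[of "2*k" z p t] k1 z2k z ct by simp
  hence pw: "poly (C p) (cis (pi / k)) = 0" using zt by simp
  have "poly (C (num n)) (cis (pi / k)) = 0" using C_dvd[OF pnum] pw by (metis dvdE mult_zero_left poly_mult)
  moreover have "k \<le> n" using kd i dvd_imp_le by force
  ultimately show False using num_nonzero[OF k1] by blast
qed

end
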